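(* Let $n\ge 3$, and let $\psi$ be either $\sinh$ (with $R>0$) or $\sin$ (with $0<R<\pi$). Set $K_\psi=-1$ if $\psi=\sinh$ and $K_\psi=1$ if $\psi=\sin$, let $\phi(r):=\int_0^r\psi(s)\,ds$ for $r\in(0,R)$, and $$H_{n,\psi}:=\frac14\left(\Big(\sup_{(0,R)}\frac{\phi}{\psi}\Big)^{-2}-n(n-2)K_\psi\right).$$ Then for every radial function $\xi\in C^1_0(\mathcal{B}_R)$ (viewed as a function of $r\in[0,R]$), $$\int_0^R\psi^{n-1}\xi_r^2\,dr\ \ge\ \frac{(n-2)^2}{4}\int_0^R\psi^{n-1}\frac{\xi^2}{\psi^2}\,dr+H_{n,\psi}\int_0^R\psi^{n-1}\xi^2\,dr.$$ Moreover, if $\psi=\sinh$, or if $\psi=\sin$ and $R<R_0:=\sup\{s\in(0,\pi/2):\frac{\sin^2 s}{(1-\cos s)^2}>n(n-2)\}$, then $H_{n,\psi}>0$, and in particular $$\int_0^R\psi^{n-1}\xi_r^2\,dr\ \ge\ \frac{(n-2)^2}{4}\int_0^R\psi^{n-1}\frac{\xi^2}{\psi^2}\,dr\quad\text{for all radial }\xi\in C^1_0(\mathcal{B}_R).$$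
   Context: $\mathcal{B}_R$ is the geodesic ball of radius $R$ centered at the pole in the Riemannian model with metric $ds^2=dr^2+\psi(r)^2\,d\Theta^2$ (hyperbolic space $\mathbb{H}^n$ for $\psi=\sinh$, elliptic space $\mathbb{S}^n$ for $\psi=\sin$); $r$ is the geodesic distance to the center. *)

theory Defs
  imports "HOL-Analysis.Analysis"
begin

text \<open>A radial function xi in C^1_0(B_R), described by its radial profile
  f : [0,R] -> real (xi(x) = f(r(x))) together with its derivative f' = xi_r.
  C^1 radial on the ball means: f is C^1 on [0,R) (one-sided at 0) with
  f'(0) = 0; compact support in the open ball means f vanishes near r = R.\<close>
definition radial_C1_0 :: "real \<Rightarrow> (real \<Rightarrow> real) \<Rightarrow> (real \<Rightarrow> real) \<Rightarrow> bool" where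
  "radial_C1_0 R f f' \<longleftrightarrow>
     (\<forall>r\<in>{0..R}. (f has_real_derivative f' r) (at r within {0..R})) \<and>
     continuous_on {0..R} f' \<and> f' 0 = 0 \<and>
     (\<exists>\<delta>>0. \<forall>r\<in>{R-\<delta>..R}. f r = 0)"

definition phi_fun :: "(real \<Rightarrow> real) \<Rightarrow> real \<Rightarrow> real" where
  "phi_fun psi r = integral {0..r} psi"

definition H_const :: "nat \<Rightarrow> (real \<Rightarrow> real) \<Rightarrow> real \<Rightarrow> real \<Rightarrow> real" where
  "H_const n psi K R =
     (1/4) * (inverse ((SUP r\<in>{0<..<R}. phi_fun psi r / psi r) ^ 2)
              - real n * (real n - 2) * K)"

definition R0_const :: "nat \<Rightarrow> real" where
  "R0_const n = Sup {s \<in> {0<..<pi/2}. (sin s)^2 / (1 - cos s)^2 > real n * (real n - 2)}"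

end

theory Submission imports Defs begin

lemma inner_ineq:
  fixes a c K S dp p ph :: real
  assumes S: "S > 0" and c: "c = inverse (S^2) / 2"
    and py: "dp^2 = 1 - K * p^2" and b: "0 \<le> p" "0 \<le> ph" "ph \<le> S * p"
  shows "2*a*dp*(a*dp + c*ph) + p*(a*(-K*p) + c*p) - (a*dp + c*ph)^2 - a^2
          - (c/2 - K*(a^2+a)) * p^2 \<ge> 0"
proof -
  have e: "2*a*dp*(a*dp + c*ph) + p*(a*(-K*p) + c*p) - (a*dp + c*ph)^2 - a^2
          - (c/2 - K*(a^2+a)) * p^2 = c*p^2/2 - c^2*ph^2"
  proof -
    have "2*a*dp*(a*dp + c*ph) + p*(a*(-K*p) + c*p) - (a*dp + c*ph)^2 - a^2
          - (c/2 - K*(a^2+a)) * p^2 = c*p^2/2 - c^2*ph^2 + a^2*(dp^2 - (1 - K*p^2))"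
      by (simp add: algebra_simps power2_eq_square)
    then show ?thesis using py by simp
  qed
  have "ph^2 \<le> (S*p)^2" using b by (simp add: power_mono)
  hence "c^2*ph^2 \<le> c^2*(S*p)^2" by (simp add: mult_left_mono)
  also have "c^2*(S*p)^2 = c*p^2/2" using S c by (simp add: field_simps power2_eq_square)
  finally show ?thesis using e by simp
qed

lemma main_gen:
  fixes n :: nat and R S K :: real and psi dpsi phi f f' :: "real \<Rightarrow> real"
  assumes n3: "n \<ge> 3" and R: "R > 0" and S: "S > 0"
    and dpsi: "\<And>r. (psi has_real_derivative dpsi r) (at r)"
    and ddpsi: "\<And>r. (dpsi has_real_derivative (- K * psi r)) (at r)"
    and dphi: "\<And>r. (phi has_real_derivative psi r) (at r)"
    and psi0: "psi 0 = 0"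
    and pyth: "\<And>r. (dpsi r)^2 = 1 - K * (psi r)^2"
    and bnd: "\<And>r. r \<in> {0..R} \<Longrightarrow> 0 \<le> psi r"
    and bnd2: "\<And>r. r \<in> {0..<R} \<Longrightarrow> 0 \<le> phi r \<and> phi r \<le> S * psi r"
    and pos: "\<And>r. r \<in> {0<..R} \<Longrightarrow> psi r > 0"
    and rad: "radial_C1_0 R f f'"
  shows "integral {0..R} (\<lambda>r. psi r ^ (n-1) * (f' r)^2) \<ge>
     (real n - 2)^2 / 4 * integral {0..R} (\<lambda>r. psi r ^ (n-1) * ((f r)^2 / (psi r)^2))
     + (1/4 * (inverse (S^2) - real n * (real n - 2) * K)) * integral {0..R} (\<lambda>r. psi r ^ (n-1) * (f r)^2)"
proof -
  from rad have fd: "\<And>r. r \<in> {0..R} \<Longrightarrow> (f has_real_derivative f' r) (at r within {0..R})"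
    unfolding radial_C1_0_def by auto
  from rad have cf': "continuous_on {0..R} f'" unfolding radial_C1_0_def by auto
  from rad obtain d where "d > 0" "\<forall>r\<in>{R-d..R}. f r = 0" unfolding radial_C1_0_def by auto
  hence fR: "f R = 0" by auto
  have cf: "continuous_on {0..R} f" using fd by (rule DERIV_continuous_on)
  have cpsi: "continuous_on {0..R} psi"
    using dpsi by (meson DERIV_continuous_on has_field_derivative_at_within)
  have cdpsi: "continuous_on {0..R} dpsi"
    using ddpsi by (meson DERIV_continuous_on has_field_derivative_at_within)
  have cphi: "continuous_on {0..R} phi"
    using dphi by (meson DERIV_continuous_on has_field_derivative_at_within)
  from n3 obtain m where nm: "n = m + 3" by (metis add.commute le_Suc_ex)
  have pw: "(x::real)^(n-1) = x^(n-3)*x^2" "(x::real)^(n-2) = x^(n-3)*x" for x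
    unfolding nm by (simp_all add: power2_eq_square power_add[symmetric] numeral_3_eq_3)
  define a where "a = (real n - 2) / 2"
  define c where "c = inverse (S^2) / 2"
  define H where "H = 1/4 * (inverse (S^2) - real n * (real n - 2) * K)"
  have H: "H = c/2 - K*(a^2+a)" unfolding H_def c_def a_def by (simp add: field_simps power2_eq_square)
  define A where "A r = a * dpsi r + c * phi r" for r
  define G where "G r = psi r ^ (n-2) * A r" for r
  define G' where "G' r = real (n-2) * psi r ^ (n-3) * dpsi r * A r + psi r ^ (n-2) * (a*(-K*psi r) + c * psi r)" for r
  have dA: "(A has_real_derivative (a*(-K*psi r) + c * psi r)) (at r)" for r
    unfolding A_def by (auto intro!: derivative_eq_intros ddpsi dphi)
  have n2: "n - 2 - 1 = n - 3" using n3 by simp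
  have dG: "(G has_real_derivative G' r) (at r)" for r
    unfolding G_def G'_def
    by (rule derivative_eq_intros dA dpsi refl)+ (simp add: n2 algebra_simps numeral_3_eq_3)
  have cA: "continuous_on {0..R} A" unfolding A_def by (intro continuous_intros cdpsi cphi)
  have cG: "continuous_on {0..R} G" unfolding G_def by (intro continuous_intros cA cpsi)
  have cG': "continuous_on {0..R} G'" unfolding G'_def by (intro continuous_intros cA cpsi cdpsi)
  have G0: "G 0 = 0" unfolding G_def using psi0 n3 by simp
  define P where "P r = psi r ^ (n-1) * (f' r)^2" for r
  define Q where "Q r = G r * (2 * f r * f' r)" for r
  define Rr where "Rr r = psi r ^ (n-3) * (A r)^2 * (f r)^2" for r
  define T where "T r = G' r * (f r)^2" for r
  define tg where "tg r = a^2 * (psi r ^ (n-3) * (f r)^2) + H * (psi r ^ (n-1) * (f r)^2)" for r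
  have iP: "P integrable_on {0..R}" unfolding P_def
    by (intro integrable_continuous_interval continuous_intros cpsi cf')
  have iQ: "Q integrable_on {0..R}" unfolding Q_def
    by (intro integrable_continuous_interval continuous_intros cG cf cf')
  have iRr: "Rr integrable_on {0..R}" unfolding Rr_def
    by (intro integrable_continuous_interval continuous_intros cpsi cA cf)
  have iT: "T integrable_on {0..R}" unfolding T_def
    by (intro integrable_continuous_interval continuous_intros cG' cf)
  have i3: "(\<lambda>r. psi r ^ (n-3) * (f r)^2) integrable_on {0..R}"
    by (intro integrable_continuous_interval continuous_intros cpsi cf)
  have i1: "(\<lambda>r. psi r ^ (n-1) * (f r)^2) integrable_on {0..R}"
    by (intro integrable_continuous_interval continuous_intros cpsi cf)
  have itg: "tg integrable_on {0..R}" unfolding tg_def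
    by (intro integrable_continuous_interval continuous_intros cpsi cf)
  have ftc: "((\<lambda>r. T r + Q r) has_integral (G R * (f R)^2 - G 0 * (f 0)^2)) {0..R}"
    unfolding T_def Q_def
  proof (rule fundamental_theorem_of_calculus)
    show "0 \<le> R" using R by simp
    fix x assume x: "x \<in> {0..R}"
    have "((\<lambda>r. G r * (f r)^2) has_real_derivative (G' x * (f x)^2 + G x * (2 * f x * f' x))) (at x within {0..R})"
      by (rule derivative_eq_intros has_field_derivative_at_within[OF dG] fd[OF x] refl)+ (simp add: algebra_simps)
    then show "((\<lambda>r. G r * (f r)^2) has_vector_derivative (G' x * (f x)^2 + G x * (2 * f x * f' x))) (at x within {0..R})"
      by (simp add: has_real_derivative_iff_has_vector_derivative)
  qed
  hence ITQ: "integral {0..R} (\<lambda>r. T r + Q r) = 0" using fR G0 by (simp add: integral_unique)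
  have nn1: "0 \<le> P r + Q r + Rr r" if r: "r \<in> {0..R}" for r
  proof -
    have "P r + Q r + Rr r = psi r ^ (n-3) * (psi r * f' r + A r * f r)^2"
    proof -
      have "psi r ^ (n-1) = psi r ^ (n-3) * (psi r)^2" "psi r ^ (n-2) = psi r ^ (n-3) * psi r"
        using pw by auto
      then show ?thesis unfolding P_def Q_def Rr_def G_def by (simp add: algebra_simps power2_eq_square)
    qed
    also have "\<dots> \<ge> 0" using bnd[OF r] by simp
    finally show ?thesis .
  qed
  have nn2: "0 \<le> T r - Rr r - tg r" if r: "r \<in> {0..R}" for r
  proof -
    have real2: "real (n-2) = 2*a" unfolding a_def using n3 by (simp add: of_nat_diff)
    have "T r - Rr r - tg r = psi r ^ (n-3) * (f r)^2 *
      (2*a*dpsi r*(a*dpsi r + c*phi r) + psi r*(a*(-K*psi r) + c*psi r) - (a*dpsi r + c*phi r)^2 - a^2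
          - (c/2 - K*(a^2+a)) * (psi r)^2)"
    proof -
      have "psi r ^ (n-1) = psi r ^ (n-3) * (psi r)^2" "psi r ^ (n-2) = psi r ^ (n-3) * psi r"
        using pw by auto
      then show ?thesis unfolding T_def Rr_def tg_def G'_def real2 H A_def by (simp add: algebra_simps power2_eq_square)
    qed
    also have "\<dots> \<ge> 0"
    proof (cases "r = R")
      case True thus ?thesis using fR by simp
    next
      case False
      hence r': "r \<in> {0..<R}" using r by auto
      show ?thesis using bnd[OF r] bnd2[OF r'] inner_ineq[OF S c_def pyth[of r], of "phi r" a]
        by (intro mult_nonneg_nonneg) auto
    qed
    finally show ?thesis .
  qed
  have iX: "(\<lambda>r. P r + Q r + Rr r) integrable_on {0..R}" using iP iQ iRr by (intro integrable_add)
  have iY: "(\<lambda>r. T r - Rr r - tg r) integrable_on {0..R}" using iT iRr itg by (intro integrable_diff)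
  have iZ: "(\<lambda>r. T r + Q r) integrable_on {0..R}" using iT iQ by (intro integrable_add)
  have "integral {0..R} (\<lambda>r. P r - tg r) = integral {0..R} (\<lambda>r. (P r + Q r + Rr r) + (T r - Rr r - tg r) - (T r + Q r))"
    by (simp add: algebra_simps)
  also have "\<dots> = integral {0..R} (\<lambda>r. P r + Q r + Rr r) + integral {0..R} (\<lambda>r. T r - Rr r - tg r) - integral {0..R} (\<lambda>r. T r + Q r)"
    by (subst integral_diff[OF integrable_add[OF iX iY] iZ], subst integral_add[OF iX iY], rule refl)
  also have "\<dots> \<ge> 0" unfolding ITQ using integral_nonneg[OF iX nn1] integral_nonneg[OF iY nn2] by simp
  finally have "integral {0..R} (\<lambda>r. P r - tg r) \<ge> 0" .
  hence main: "integral {0..R} P \<ge> integral {0..R} tg" using iP itg by (simp add: integral_diff)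
  have itgE: "integral {0..R} tg = a^2 * integral {0..R} (\<lambda>r. psi r ^ (n-3) * (f r)^2) + H * integral {0..R} (\<lambda>r. psi r ^ (n-1) * (f r)^2)"
  proof -
    have j3: "(\<lambda>r. a^2 * (psi r ^ (n-3) * (f r)^2)) integrable_on {0..R}"
      by (intro integrable_continuous_interval continuous_intros cpsi cf)
    have j1: "(\<lambda>r. H * (psi r ^ (n-1) * (f r)^2)) integrable_on {0..R}"
      by (intro integrable_continuous_interval continuous_intros cpsi cf)
    show ?thesis unfolding tg_def by (subst integral_add[OF j3 j1], simp)
  qed
  have spike: "integral {0..R} (\<lambda>r. psi r ^ (n-1) * ((f r)^2 / (psi r)^2)) = integral {0..R} (\<lambda>r. psi r ^ (n-3) * (f r)^2)"
  proof (rule integral_spike[of "{0}"])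
    show "negligible {0::real}" by simp
    fix x assume x: "x \<in> {0..R} - {0}"
    hence "psi x > 0" using pos by auto
    thus "psi x ^ (n-3) * (f x)^2 = psi x ^ (n-1) * ((f x)^2 / (psi x)^2)"
      unfolding pw by (simp add: field_simps)
  qed
  have a2: "a^2 = (real n - 2)^2 / 4" unfolding a_def by (simp add: power_divide)
  show ?thesis using main unfolding itgE spike a2 H_def[symmetric] P_def by simp
qed

lemma phi_eval:
  assumes "r \<ge> 0" "\<And>x. (Phi has_real_derivative psi x) (at x)"
  shows "phi_fun psi r = Phi r - Phi 0"
  unfolding phi_fun_def
proof (rule integral_unique, rule fundamental_theorem_of_calculus)
  show "0 \<le> r" using assms by simp
  fix x show "(Phi has_vector_derivative psi x) (at x within {0..r})"
    using has_field_derivative_at_within[OF assms(2)]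
    by (simp add: has_real_derivative_iff_has_vector_derivative[symmetric])
qed

lemma half_tan:
  assumes "0 < s" "s < pi"
  shows "(1 - cos s) / sin s = tan (s/2)"
proof -
  define t where "t = s/2"
  have s: "s = 2*t" unfolding t_def by simp
  have t: "0 < t" "t < pi/2" using assms unfolding t_def by auto
  have "sin t > 0" using t by (intro sin_gt_zero) auto
  moreover have "cos t > 0" using t by (intro cos_gt_zero) auto
  ultimately show ?thesis unfolding s t_def[symmetric] cos_double_sin sin_double
    by (simp add: tan_def field_simps power2_eq_square)
qed

lemma sup_lem:
  fixes g :: "real \<Rightarrow> real"
  assumes "R > 0" "\<And>r. r\<in>{0<..<R} \<Longrightarrow> 0 < g r" "\<And>r. r\<in>{0<..<R} \<Longrightarrow> g r \<le> B"
  shows "0 < (SUP r\<in>{0<..<R}. g r)" "(SUP r\<in>{0<..<R}. g r) \<le> B"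
    "\<And>r. r\<in>{0<..<R} \<Longrightarrow> g r \<le> (SUP r\<in>{0<..<R}. g r)"
proof -
  have bdd: "bdd_above (g ` {0<..<R})" using assms(3) by (intro bdd_aboveI2) auto
  show le: "\<And>r. r\<in>{0<..<R} \<Longrightarrow> g r \<le> (SUP r\<in>{0<..<R}. g r)"
    by (rule cSUP_upper[OF _ bdd])
  have m: "R/2 \<in> {0<..<R}" using assms(1) by auto
  show "0 < (SUP r\<in>{0<..<R}. g r)" using assms(2)[OF m] le[OF m] by linarith
  show "(SUP r\<in>{0<..<R}. g r) \<le> B" using m assms(3) by (intro cSUP_least) auto
qed

lemma R0_lem:
  assumes n3: "n \<ge> 3" and R: "0 < R" and RR: "R < R0_const n"
  shows "(tan (R/2))^2 * (real n * (real n - 2)) < 1"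
proof -
  define N where "N = real n * (real n - 2)"
  have N: "N > 0" unfolding N_def using n3 by simp
  define X where "X = {s \<in> {0<..<pi/2}. (sin s)^2 / (1 - cos s)^2 > N}"
  have ratio: "(sin s)^2 / (1 - cos s)^2 = inverse ((tan (s/2))^2)" if "0 < s" "s < pi" for s
  proof -
    have "(1 - cos s) / sin s = tan (s/2)" using half_tan that by blast
    hence "((1 - cos s) / sin s)^2 = (tan (s/2))^2" by simp
    hence "(1 - cos s)^2 / (sin s)^2 = (tan (s/2))^2" by (simp add: power_divide)
    thus ?thesis by (metis inverse_divide)
  qed
  have bdd: "bdd_above X" unfolding X_def by (intro bdd_aboveI[of _ "pi/2"]) auto
  have ne: "X \<noteq> {}"
  proof -
    have "isCont tan 0" by (simp add: isCont_tan)
    hence "(tan \<longlongrightarrow> 0) (at 0)" by (simp add: isCont_def)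
    hence "(tan \<longlongrightarrow> 0) (at_right 0)" by (rule tendsto_mono[OF at_within_le_at])
    hence "((\<lambda>t. (tan t)^2) \<longlongrightarrow> 0^2) (at_right 0)" by (intro tendsto_power)
    hence e1: "eventually (\<lambda>t. (tan t)^2 < 1/N) (at_right 0)" using N by (intro order_tendstoD(2)) auto
    have e2: "eventually (\<lambda>t. t < pi/4) (at_right (0::real))"
      unfolding eventually_at_right_field by (intro exI[of _ "pi/4"]) auto
    have e3: "eventually (\<lambda>t. 0 < t) (at_right (0::real))" by (rule eventually_at_right_less)
    have ev: "eventually (\<lambda>t. (tan t)^2 < 1/N \<and> t < pi/4 \<and> 0 < t) (at_right 0)"
      using e1 e2 e3 by (auto elim: eventually_elim2 eventually_mono intro: eventually_conj)
    obtain t where t: "(tan t)^2 < 1/N" "t < pi/4" "0 < t"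
      using eventually_happens[OF ev] trivial_limit_at_right_real by auto
    have tp: "tan t > 0" using t by (intro tan_gt_zero) auto
    have "(sin (2*t))^2 / (1 - cos (2*t))^2 = inverse ((tan t)^2)" using ratio[of "2*t"] t by simp
    also have "\<dots> > N" using t tp N by (simp add: field_simps)
    finally have "2*t \<in> X" unfolding X_def using t by auto
    thus ?thesis by auto
  qed
  have "R < Sup X" using RR unfolding R0_const_def X_def N_def by simp
  then obtain s where s: "s \<in> X" "R < s" using less_cSup_iff[OF ne bdd] by auto
  have s': "0 < s" "s < pi/2" "(sin s)^2 / (1 - cos s)^2 > N" using s unfolding X_def by auto
  have "tan (R/2) < tan (s/2)" using s' s(2) R by (intro tan_monotone) auto
  moreover have "tan (R/2) > 0" using R s' s(2) by (intro tan_gt_zero) auto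
  ultimately have lt: "(tan (R/2))^2 < (tan (s/2))^2" by (simp add: power_strict_mono)
  have "inverse ((tan (s/2))^2) > N" using s' ratio[of s] by simp
  moreover have "(tan (s/2))^2 > 0" using \<open>tan (R/2) > 0\<close> lt
    by (smt (verit) zero_less_power)
  ultimately have "(tan (s/2))^2 * N < 1" by (simp add: field_simps)
  hence "(tan (R/2))^2 * N < 1" using lt N by (smt (verit) mult_strict_right_mono)
  thus ?thesis unfolding N_def .
qed

theorem proposition1p8:
  fixes n :: nat and R K :: real and psi :: "real \<Rightarrow> real"
  assumes "n \<ge> 3"
    and "(psi = sinh \<and> K = -1 \<and> R > 0) \<or> (psi = sin \<and> K = 1 \<and> 0 < R \<and> R < pi)"
  shows "(\<forall>f f'. radial_C1_0 R f f' \<longrightarrow>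
            integral {0..R} (\<lambda>r. psi r ^ (n-1) * (f' r)^2)
            \<ge> (real n - 2)^2 / 4 * integral {0..R} (\<lambda>r. psi r ^ (n-1) * ((f r)^2 / (psi r)^2))
              + H_const n psi K R * integral {0..R} (\<lambda>r. psi r ^ (n-1) * (f r)^2))
       \<and> ((psi = sinh \<or> (psi = sin \<and> R < R0_const n)) \<longrightarrow>
            H_const n psi K R > 0 \<and>
            (\<forall>f f'. radial_C1_0 R f f' \<longrightarrow>
              integral {0..R} (\<lambda>r. psi r ^ (n-1) * (f' r)^2)
              \<ge> (real n - 2)^2 / 4 * integral {0..R} (\<lambda>r. psi r ^ (n-1) * ((f r)^2 / (psi r)^2))))"
proof -
  define S where "S = (SUP r\<in>{0<..<R}. phi_fun psi r / psi r)"
  have HS: "H_const n psi K R = 1/4 * (inverse (S^2) - real n * (real n - 2) * K)"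
    unfolding H_const_def S_def by simp
  have R: "R > 0" using assms(2) by auto
  have nn: "real n * (real n - 2) > 0" using assms(1) by simp
  have "(sinh::real\<Rightarrow>real) \<noteq> sin"
  proof
    assume "(sinh::real\<Rightarrow>real) = sin"
    hence "sinh pi = sin (pi::real)" by simp
    thus False by simp
  qed
  have main: "S > 0 \<and> (\<forall>f f'. radial_C1_0 R f f' \<longrightarrow>
            integral {0..R} (\<lambda>r. psi r ^ (n-1) * (f' r)^2)
            \<ge> (real n - 2)^2 / 4 * integral {0..R} (\<lambda>r. psi r ^ (n-1) * ((f r)^2 / (psi r)^2))
              + (1/4 * (inverse (S^2) - real n * (real n - 2) * K)) * integral {0..R} (\<lambda>r. psi r ^ (n-1) * (f r)^2))
        \<and> (psi = sin \<longrightarrow> S \<le> tan (R/2))"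
  proof (cases "psi = sinh")
    case True
    hence K: "K = -1" using assms(2) \<open>(sinh::real\<Rightarrow>real) \<noteq> sin\<close> by auto
    define g where "g r = (cosh r - 1) / sinh r" for r :: real
    have phiE: "phi_fun sinh r = cosh r - 1" if "r \<ge> 0" for r
    proof -
      have d: "\<And>x. (cosh has_real_derivative sinh x) (at x)" by (auto intro!: derivative_eq_intros)
      show ?thesis using phi_eval[OF that d] by simp
    qed
    have SE: "S = (SUP r\<in>{0<..<R}. g r)" unfolding S_def True g_def
      by (rule SUP_cong) (auto simp: phiE)
    have gpos: "0 < g r" if "r \<in> {0<..<R}" for r
    proof -
      have sp: "sinh r > 0" using that by simp
      have "cosh r \<noteq> 1"
      proof
        assume "cosh r = 1"
        hence "(sinh r)^2 = 0" using cosh_square_eq[of r] by simp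
        thus False using sp by simp
      qed
      hence "cosh r > 1" using cosh_real_ge_1[of r] by linarith
      thus ?thesis unfolding g_def using sp by simp
    qed
    have gle: "g r \<le> 1" if "r \<in> {0<..<R}" for r
    proof -
      have sp: "sinh r > 0" using that by simp
      have "cosh r - sinh r \<le> 1" unfolding cosh_minus_sinh using that by simp
      thus ?thesis unfolding g_def using sp by simp
    qed
    have SL1: "S > 0" unfolding SE using sup_lem(1)[of R g "1"] R gpos gle by blast
    have SL2: "S \<le> 1" unfolding SE using sup_lem(2)[of R g "1"] R gpos gle by blast
    have SL3: "\<And>r. r\<in>{0<..<R} \<Longrightarrow> g r \<le> S" unfolding SE using sup_lem(3)[of R g "1"] R gpos gle by blast
    have ineq: "\<forall>f f'. radial_C1_0 R f f' \<longrightarrow>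
            integral {0..R} (\<lambda>r. psi r ^ (n-1) * (f' r)^2)
            \<ge> (real n - 2)^2 / 4 * integral {0..R} (\<lambda>r. psi r ^ (n-1) * ((f r)^2 / (psi r)^2))
              + (1/4 * (inverse (S^2) - real n * (real n - 2) * K)) * integral {0..R} (\<lambda>r. psi r ^ (n-1) * (f r)^2)"
    proof (intro allI impI)
      fix f f' assume rad: "radial_C1_0 R f f'"
      show "integral {0..R} (\<lambda>r. psi r ^ (n-1) * (f' r)^2)
            \<ge> (real n - 2)^2 / 4 * integral {0..R} (\<lambda>r. psi r ^ (n-1) * ((f r)^2 / (psi r)^2))
              + (1/4 * (inverse (S^2) - real n * (real n - 2) * K)) * integral {0..R} (\<lambda>r. psi r ^ (n-1) * (f r)^2)"
        unfolding True
      proof (rule main_gen[OF assms(1) R SL1, where dpsi = cosh and phi = "\<lambda>r. cosh r - 1", OF _ _ _ _ _ _ _ _ rad])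
        show "(sinh has_real_derivative cosh r) (at r)" for r by (auto intro!: derivative_eq_intros)
        show "(cosh has_real_derivative - K * sinh r) (at r)" for r unfolding K by (auto intro!: derivative_eq_intros)
        show "((\<lambda>r. cosh r - 1) has_real_derivative sinh r) (at r)" for r by (auto intro!: derivative_eq_intros)
        show "sinh 0 = 0" by simp
        show "(cosh r)^2 = 1 - K * (sinh r)^2" for r unfolding K cosh_square_eq by simp
        show "0 \<le> sinh r" if "r \<in> {0..R}" for r using that by simp
        show "0 < sinh r" if "r \<in> {0<..R}" for r using that by simp
        show "0 \<le> cosh r - 1 \<and> cosh r - 1 \<le> S * sinh r" if r: "r \<in> {0..<R}" for r
        proof (cases "r = 0")
          case True thus ?thesis by simp
        next
          case False
          hence r': "r \<in> {0<..<R}" using r by auto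
          have sp: "sinh r > 0" using r' by simp
          have "g r \<le> S" using SL3[OF r'] .
          thus ?thesis using sp cosh_real_ge_1[of r] unfolding g_def by (simp add: field_simps)
        qed
      qed
    qed
    show ?thesis using SL1 ineq True \<open>(sinh::real\<Rightarrow>real) \<noteq> sin\<close> by auto
  next
    case False
    hence ps: "psi = sin" and K: "K = 1" and Rpi: "R < pi" using assms(2) by auto
    define g where "g r = tan (r/2)" for r :: real
    have phiE: "phi_fun sin r = 1 - cos r" if "r \<ge> 0" for r
    proof -
      have d: "\<And>x. ((\<lambda>r. - cos r) has_real_derivative sin x) (at x)" by (auto intro!: derivative_eq_intros)
      show ?thesis using phi_eval[OF that d] by simp
    qed
    have SE: "S = (SUP r\<in>{0<..<R}. g r)" unfolding S_def ps g_def
      by (rule SUP_cong) (use Rpi in \<open>auto simp: phiE half_tan\<close>)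
    have gpos: "0 < g r" if "r \<in> {0<..<R}" for r
      unfolding g_def using that Rpi by (intro tan_gt_zero) auto
    have gle: "g r \<le> tan (R/2)" if "r \<in> {0<..<R}" for r
      unfolding g_def using that Rpi by (intro less_imp_le tan_monotone) auto
    have SL1: "S > 0" unfolding SE using sup_lem(1)[of R g "tan (R/2)"] R gpos gle by blast
    have SL2: "S \<le> tan (R/2)" unfolding SE using sup_lem(2)[of R g "tan (R/2)"] R gpos gle by blast
    have SL3: "\<And>r. r\<in>{0<..<R} \<Longrightarrow> g r \<le> S" unfolding SE using sup_lem(3)[of R g "tan (R/2)"] R gpos gle by blast
    have ineq: "\<forall>f f'. radial_C1_0 R f f' \<longrightarrow>
            integral {0..R} (\<lambda>r. psi r ^ (n-1) * (f' r)^2)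
            \<ge> (real n - 2)^2 / 4 * integral {0..R} (\<lambda>r. psi r ^ (n-1) * ((f r)^2 / (psi r)^2))
              + (1/4 * (inverse (S^2) - real n * (real n - 2) * K)) * integral {0..R} (\<lambda>r. psi r ^ (n-1) * (f r)^2)"
    proof (intro allI impI)
      fix f f' assume rad: "radial_C1_0 R f f'"
      show "integral {0..R} (\<lambda>r. psi r ^ (n-1) * (f' r)^2)
            \<ge> (real n - 2)^2 / 4 * integral {0..R} (\<lambda>r. psi r ^ (n-1) * ((f r)^2 / (psi r)^2))
              + (1/4 * (inverse (S^2) - real n * (real n - 2) * K)) * integral {0..R} (\<lambda>r. psi r ^ (n-1) * (f r)^2)"
        unfolding ps
      proof (rule main_gen[OF assms(1) R SL1, where dpsi = cos and phi = "\<lambda>r. 1 - cos r", OF _ _ _ _ _ _ _ _ rad])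
        show "(sin has_real_derivative cos r) (at r)" for r by (auto intro!: derivative_eq_intros)
        show "(cos has_real_derivative - K * sin r) (at r)" for r unfolding K by (auto intro!: derivative_eq_intros)
        show "((\<lambda>r. 1 - cos r) has_real_derivative sin r) (at r)" for r by (auto intro!: derivative_eq_intros)
        show "sin 0 = 0" by simp
        show "(cos r)^2 = 1 - K * (sin r)^2" for r unfolding K cos_squared_eq by simp
        show "0 \<le> sin r" if "r \<in> {0..R}" for r using that Rpi by (intro sin_ge_zero) auto
        show "0 < sin r" if "r \<in> {0<..R}" for r using that Rpi by (intro sin_gt_zero) auto
        show "0 \<le> 1 - cos r \<and> 1 - cos r \<le> S * sin r" if r: "r \<in> {0..<R}" for r
        proof (cases "r = 0")
          case True thus ?thesis by simp
        next
          case False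
          hence r': "r \<in> {0<..<R}" using r by auto
          have sp: "sin r > 0" using r' Rpi by (intro sin_gt_zero) auto
          have "g r \<le> S" using SL3[OF r'] .
          hence "(1 - cos r) / sin r \<le> S" unfolding g_def using r' Rpi by (subst half_tan) auto
          thus ?thesis using sp by (simp add: field_simps)
        qed
      qed
    qed
    show ?thesis using SL1 SL2 ineq by auto
  qed
  from main have Spos: "S > 0" by blast
  from main have ineq0: "\<forall>f f'. radial_C1_0 R f f' \<longrightarrow>
            integral {0..R} (\<lambda>r. psi r ^ (n-1) * (f' r)^2)
            \<ge> (real n - 2)^2 / 4 * integral {0..R} (\<lambda>r. psi r ^ (n-1) * ((f r)^2 / (psi r)^2))
              + H_const n psi K R * integral {0..R} (\<lambda>r. psi r ^ (n-1) * (f r)^2)" unfolding HS by blast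
  from main have Stan: "psi = sin \<Longrightarrow> S \<le> tan (R/2)" by blast
  have part2: "H_const n psi K R > 0 \<and>
            (\<forall>f f'. radial_C1_0 R f f' \<longrightarrow>
              integral {0..R} (\<lambda>r. psi r ^ (n-1) * (f' r)^2)
              \<ge> (real n - 2)^2 / 4 * integral {0..R} (\<lambda>r. psi r ^ (n-1) * ((f r)^2 / (psi r)^2)))"
    if hyp: "psi = sinh \<or> (psi = sin \<and> R < R0_const n)"
  proof -
    have Hpos: "H_const n psi K R > 0"
    proof (cases "psi = sinh")
      case True
      hence "K = -1" using assms(2) \<open>(sinh::real\<Rightarrow>real) \<noteq> sin\<close> by auto
      thus ?thesis unfolding HS using nn by (simp add: add_nonneg_pos)
    next
      case False
      hence ps: "psi = sin" "R < R0_const n" and K: "K = 1" using hyp assms(2) by auto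
      have t: "(tan (R/2))^2 * (real n * (real n - 2)) < 1" using R0_lem[OF assms(1) R ps(2)] .
      have "S^2 \<le> (tan (R/2))^2" using Stan[OF ps(1)] Spos by (simp add: power_mono)
      hence "S^2 * (real n * (real n - 2)) < 1" using t nn
        by (smt (verit) mult_right_mono)
      hence "inverse (S^2) > real n * (real n - 2)" using Spos by (simp add: field_simps)
      thus ?thesis unfolding HS using K by simp
    qed
    have "\<forall>f f'. radial_C1_0 R f f' \<longrightarrow>
              integral {0..R} (\<lambda>r. psi r ^ (n-1) * (f' r)^2)
              \<ge> (real n - 2)^2 / 4 * integral {0..R} (\<lambda>r. psi r ^ (n-1) * ((f r)^2 / (psi r)^2))"
    proof (intro allI impI)
      fix f f' assume rad: "radial_C1_0 R f f'"
      have psinn: "0 \<le> psi r" if "r \<in> {0..R}" for r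
      proof (cases "psi = sinh")
        case True thus ?thesis using that by simp
      next
        case False
        hence "psi = sin" "R < pi" using assms(2) by auto
        thus ?thesis using that by (auto intro: sin_ge_zero)
      qed
      have I0: "integral {0..R} (\<lambda>r. psi r ^ (n-1) * (f r)^2) \<ge> 0"
      proof (cases "(\<lambda>r. psi r ^ (n-1) * (f r)^2) integrable_on {0..R}")
        case True thus ?thesis using psinn by (intro integral_nonneg) auto
      next
        case False thus ?thesis by (simp add: not_integrable_integral)
      qed
      have "H_const n psi K R * integral {0..R} (\<lambda>r. psi r ^ (n-1) * (f r)^2) \<ge> 0"
        using Hpos I0 by simp
      thus "integral {0..R} (\<lambda>r. psi r ^ (n-1) * (f' r)^2)
              \<ge> (real n - 2)^2 / 4 * integral {0..R} (\<lambda>r. psi r ^ (n-1) * ((f r)^2 / (psi r)^2))"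
      proof -
        have "(real n - 2)^2 / 4 * integral {0..R} (\<lambda>r. psi r ^ (n-1) * ((f r)^2 / (psi r)^2))
              + H_const n psi K R * integral {0..R} (\<lambda>r. psi r ^ (n-1) * (f r)^2) \<le> integral {0..R} (\<lambda>r. psi r ^ (n-1) * (f' r)^2)"
          using ineq0 rad by blast
        thus ?thesis using \<open>H_const n psi K R * integral {0..R} (\<lambda>r. psi r ^ (n-1) * (f r)^2) \<ge> 0\<close> by linarith
      qed
    qed
    with Hpos show ?thesis by blast
  qed
  show ?thesis using ineq0 part2 by blast
qed

end
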